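(* Let $A$ and $G$ be selfadjoint operators in $\mathcal H$ with $\rho(AG)\neq\emptyset$ and $\rho(GA)\neq\emptyset$. Then the following are equivalent: (a) $AG$ is boundedly invertible; (b) $\operatorname{ran}(AG)=\mathcal H$; (c) $GA$ is boundedly invertible; (d) $\operatorname{ran}(GA)=\mathcal H$; (e) $A$ and $G$ are boundedly invertible. In particular, $\sigma(AG)=\sigma(GA)$.
   Context: $(\mathcal H,(\cdot,\cdot))$ is a complex Hilbert space; $A,G$ are possibly unbounded selfadjoint operators; $AG$, $GA$ are the operator products with natural domains. For a linear operator $S$, $\rho(S)$ is the set of $\lambda\in\mathbb C$ with $S-\lambda$ injective, surjective and with bounded everywhere defined inverse; $\sigma(S)=\mathbb C\setminus\rho(S)$; $S$ is boundedly invertible if $0\in\rho(S)$. *)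

theory Defs
  imports Complex_Main
begin

text \<open>A complex Hilbert space is modelled as a type 'a carrying an additive group
structure, a complex scalar multiplication sc and an inner product ip (linear in the
first argument, conjugate linear in the second), complete w.r.t. the induced norm.
Linear operators (possibly unbounded) are represented by their graphs.\<close>

definition hnorm :: "('a \<Rightarrow> 'a \<Rightarrow> complex) \<Rightarrow> 'a \<Rightarrow> real" where
  "hnorm ip x = sqrt (Re (ip x x))"

definition chilbert :: "(complex \<Rightarrow> 'a::ab_group_add \<Rightarrow> 'a) \<Rightarrow> ('a \<Rightarrow> 'a \<Rightarrow> complex) \<Rightarrow> bool" where
  "chilbert sc ip \<longleftrightarrow>
     (\<forall>x. sc 1 x = x) \<and>
     (\<forall>a b x. sc a (sc b x) = sc (a * b) x) \<and>
     (\<forall>a x y. sc a (x + y) = sc a x + sc a y) \<and>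
     (\<forall>a b x. sc (a + b) x = sc a x + sc b x) \<and>
     (\<forall>x y z. ip (x + y) z = ip x z + ip y z) \<and>
     (\<forall>a x y. ip (sc a x) y = a * ip x y) \<and>
     (\<forall>x y. ip y x = cnj (ip x y)) \<and>
     (\<forall>x. Im (ip x x) = 0 \<and> 0 \<le> Re (ip x x)) \<and>
     (\<forall>x. ip x x = 0 \<longrightarrow> x = 0) \<and>
     (\<forall>X :: nat \<Rightarrow> 'a.
        (\<forall>e>0. \<exists>N. \<forall>m\<ge>N. \<forall>n\<ge>N. hnorm ip (X m - X n) < e) \<longrightarrow>
        (\<exists>L. (\<lambda>n. hnorm ip (X n - L)) \<longlonglongrightarrow> 0))"

definition linear_op :: "(complex \<Rightarrow> 'a::ab_group_add \<Rightarrow> 'a) \<Rightarrow> ('a \<times> 'a) set \<Rightarrow> bool" where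
  "linear_op sc S \<longleftrightarrow>
     (0, 0) \<in> S \<and>
     (\<forall>x y u v. (x, y) \<in> S \<longrightarrow> (u, v) \<in> S \<longrightarrow> (x + u, y + v) \<in> S) \<and>
     (\<forall>a x y. (x, y) \<in> S \<longrightarrow> (sc a x, sc a y) \<in> S) \<and>
     (\<forall>x y z. (x, y) \<in> S \<longrightarrow> (x, z) \<in> S \<longrightarrow> y = z)"

definition dense_in :: "('a \<Rightarrow> 'a \<Rightarrow> complex) \<Rightarrow> 'a::ab_group_add set \<Rightarrow> bool" where
  "dense_in ip D \<longleftrightarrow> (\<forall>x. \<forall>e>0. \<exists>d\<in>D. hnorm ip (x - d) < e)"

definition adjoint :: "('a \<Rightarrow> 'a \<Rightarrow> complex) \<Rightarrow> ('a \<times> 'a) set \<Rightarrow> ('a \<times> 'a) set" where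
  "adjoint ip S = {(y, z). \<forall>x w. (x, w) \<in> S \<longrightarrow> ip w y = ip x z}"

definition selfadjoint :: "(complex \<Rightarrow> 'a::ab_group_add \<Rightarrow> 'a) \<Rightarrow> ('a \<Rightarrow> 'a \<Rightarrow> complex) \<Rightarrow> ('a \<times> 'a) set \<Rightarrow> bool" where
  "selfadjoint sc ip S \<longleftrightarrow> linear_op sc S \<and> dense_in ip (Domain S) \<and> adjoint ip S = S"

definition op_mult :: "('a \<times> 'a) set \<Rightarrow> ('a \<times> 'a) set \<Rightarrow> ('a \<times> 'a) set" where
  "op_mult A G = {(x, z). \<exists>y. (x, y) \<in> G \<and> (y, z) \<in> A}"

definition op_shift :: "(complex \<Rightarrow> 'a::ab_group_add \<Rightarrow> 'a) \<Rightarrow> ('a \<times> 'a) set \<Rightarrow> complex \<Rightarrow> ('a \<times> 'a) set" where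
  "op_shift sc S l = {(x, y - sc l x) | x y. (x, y) \<in> S}"

definition has_bounded_inverse :: "('a::ab_group_add \<Rightarrow> 'a \<Rightarrow> complex) \<Rightarrow> ('a \<times> 'a) set \<Rightarrow> bool" where
  "has_bounded_inverse ip T \<longleftrightarrow>
     (\<forall>x1 x2 y. (x1, y) \<in> T \<longrightarrow> (x2, y) \<in> T \<longrightarrow> x1 = x2) \<and>
     Range T = UNIV \<and>
     (\<exists>C. \<forall>x y. (x, y) \<in> T \<longrightarrow> hnorm ip x \<le> C * hnorm ip y)"

definition resolvent_set :: "(complex \<Rightarrow> 'a::ab_group_add \<Rightarrow> 'a) \<Rightarrow> ('a \<Rightarrow> 'a \<Rightarrow> complex) \<Rightarrow> ('a \<times> 'a) set \<Rightarrow> complex set" where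
  "resolvent_set sc ip S = {l. has_bounded_inverse ip (op_shift sc S l)}"

definition spectrum_op :: "(complex \<Rightarrow> 'a::ab_group_add \<Rightarrow> 'a) \<Rightarrow> ('a \<Rightarrow> 'a \<Rightarrow> complex) \<Rightarrow> ('a \<times> 'a) set \<Rightarrow> complex set" where
  "spectrum_op sc ip S = UNIV - resolvent_set sc ip S"

definition boundedly_invertible :: "(complex \<Rightarrow> 'a::ab_group_add \<Rightarrow> 'a) \<Rightarrow> ('a \<Rightarrow> 'a \<Rightarrow> complex) \<Rightarrow> ('a \<times> 'a) set \<Rightarrow> bool" where
  "boundedly_invertible sc ip S \<longleftrightarrow> 0 \<in> resolvent_set sc ip S"

end

theory Submission
  imports Defs
begin


locale hs =
  fixes sc :: "complex \<Rightarrow> 'a::ab_group_add \<Rightarrow> 'a" and ip :: "'a \<Rightarrow> 'a \<Rightarrow> complex"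
  assumes ch: "chilbert sc ip"
begin

lemma mult_cnj_cmod: "z * cnj z = complex_of_real ((cmod z)^2)"
  using cmod_power2[of z] by (simp add: complex_eq_iff power2_eq_square)

abbreviation hn where "hn \<equiv> hnorm ip"

sublocale vs: vector_space sc
  using ch unfolding chilbert_def vector_space_def
  by (auto simp: algebra_simps)

lemma ip_add_l: "ip (x + y) z = ip x z + ip y z" using ch unfolding chilbert_def by blast
lemma ip_sc_l: "ip (sc a x) y = a * ip x y" using ch unfolding chilbert_def by blast
lemma ip_cnj: "ip y x = cnj (ip x y)" using ch unfolding chilbert_def by blast
lemma ip_pos: "Im (ip x x) = 0" "0 \<le> Re (ip x x)" using ch unfolding chilbert_def by blast+
lemma ip_def0: "ip x x = 0 \<Longrightarrow> x = 0" using ch unfolding chilbert_def by blast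
lemma complete: "(\<forall>e>0. \<exists>N. \<forall>m\<ge>N. \<forall>n\<ge>N. hn (X m - X n) < e) \<Longrightarrow> (\<exists>L. (\<lambda>n. hn (X n - L)) \<longlonglongrightarrow> 0)"
  using ch unfolding chilbert_def by blast

lemma ip_add_r: "ip z (x + y) = ip z x + ip z y"
  by (metis ip_cnj ip_add_l complex_cnj_add)
lemma ip_sc_r: "ip x (sc a y) = cnj a * ip x y"
  by (metis ip_cnj ip_sc_l complex_cnj_mult)
lemma ip_0_l[simp]: "ip 0 y = 0" by (metis ip_sc_l vs.scale_zero_left mult_zero_left)
lemma ip_0_r[simp]: "ip y 0 = 0" by (metis ip_cnj ip_0_l complex_cnj_zero)
lemma ip_minus_l: "ip (- x) y = - ip x y"
  by (metis add.right_inverse add_eq_0_iff ip_0_l ip_add_l)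
lemma ip_minus_r: "ip y (- x) = - ip y x"
  by (metis ip_cnj ip_minus_l complex_cnj_minus)
lemma ip_diff_l: "ip (x - y) z = ip x z - ip y z"
  using ip_add_l[of x "- y" z] ip_minus_l[of y z] by simp
lemma ip_diff_r: "ip z (x - y) = ip z x - ip z y"
  using ip_add_r[of z x "- y"] ip_minus_r[of z y] by simp

lemma ip_self_real: "ip x x = complex_of_real (Re (ip x x))"
  using ip_pos(1)[of x] by (simp add: complex_eq_iff)

lemma hn_nonneg[simp]: "0 \<le> hn x" unfolding hnorm_def using ip_pos(2)[of x] by simp
lemma hn_sq: "(hn x)^2 = Re (ip x x)" unfolding hnorm_def using ip_pos(2)[of x] by simp
lemma hn_0[simp]: "hn 0 = 0" unfolding hnorm_def by simp
lemma hn_eq_0[simp]: "hn x = 0 \<longleftrightarrow> x = 0"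
  unfolding hnorm_def using ip_pos[of x] ip_def0[of x] ip_self_real[of x]
  by (metis hn_0 hnorm_def real_sqrt_eq_zero_cancel_iff of_real_0)
lemma ip_self_hn: "ip x x = complex_of_real ((hn x)^2)"
  using ip_self_real hn_sq by simp

lemma hn_sc: "hn (sc a x) = cmod a * hn x"
proof -
  have "ip (sc a x) (sc a x) = a * cnj a * ip x x" by (simp add: ip_sc_l ip_sc_r)
  also have "a * cnj a = complex_of_real ((cmod a)^2)" by (rule mult_cnj_cmod)
  finally have "Re (ip (sc a x) (sc a x)) = (cmod a)^2 * Re (ip x x)"
    by simp
  then show ?thesis unfolding hnorm_def by (simp add: real_sqrt_mult)
qed

lemma hn_minus: "hn (- x) = hn x"
  using hn_sc[of "-1" x] by (simp add: vs.scale_minus_left)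

lemma hn_commute: "hn (x - y) = hn (y - x)"
  by (metis hn_minus minus_diff_eq)

lemma cauchy_schwarz: "cmod (ip x y) \<le> hn x * hn y"
proof (cases "y = 0")
  case True then show ?thesis by simp
next
  case False
  define t where "t = ip x y / ip y y"
  have yy: "ip y y = complex_of_real ((hn y)^2)" by (rule ip_self_hn)
  have hy: "hn y > 0" using False hn_nonneg[of y] hn_eq_0[of y] by linarith
  have "ip (x - sc t y) (x - sc t y) = ip x x - cnj t * ip x y - t * ip y x + t * cnj t * ip y y"
    by (simp add: ip_diff_l ip_diff_r ip_sc_l ip_sc_r algebra_simps)
  also have "ip y x = cnj (ip x y)" by (rule ip_cnj)
  also have "t * cnj t * ip y y = ip x y * cnj (ip x y) / ip y y"
    using hy yy by (simp add: t_def field_simps power2_eq_square)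
  also have "cnj t * ip x y = ip x y * cnj (ip x y) / ip y y"
    using hy yy by (simp add: t_def field_simps)
  also have "t * cnj (ip x y) = ip x y * cnj (ip x y) / ip y y"
    using hy yy by (simp add: t_def field_simps)
  finally have "ip (x - sc t y) (x - sc t y) = ip x x - ip x y * cnj (ip x y) / ip y y" by simp
  also have "\<dots> = complex_of_real ((hn x)^2 - (cmod (ip x y))^2 / (hn y)^2)"
    by (simp add: ip_self_hn yy mult_cnj_cmod)
  finally have "0 \<le> (hn x)^2 - (cmod (ip x y))^2 / (hn y)^2"
    using ip_pos(2)[of "x - sc t y"] by simp
  then have "(cmod (ip x y))^2 \<le> (hn x * hn y)^2"
    using hy False by (simp add: divide_le_eq power_mult_distrib)
  then show ?thesis
    by (meson hn_nonneg mult_nonneg_nonneg power2_le_imp_le)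
qed

lemma hn_triangle: "hn (x + y) \<le> hn x + hn y"
proof -
  have "ip (x+y) (x+y) = ip x x + ip y y + (ip x y + cnj (ip x y))"
    by (simp add: ip_add_l ip_add_r algebra_simps flip: ip_cnj)
  then have "(hn (x+y))^2 = (hn x)^2 + (hn y)^2 + 2 * Re (ip x y)"
    by (simp add: hn_sq)
  also have "Re (ip x y) \<le> hn x * hn y"
    using cauchy_schwarz[of x y] complex_Re_le_cmod[of "ip x y"] by linarith
  finally have "(hn (x+y))^2 \<le> (hn x + hn y)^2" by (simp add: power2_sum)
  then show ?thesis by (meson add_nonneg_nonneg hn_nonneg power2_le_imp_le)
qed

lemma hn_triangle_diff: "hn (x - z) \<le> hn (x - y) + hn (y - z)"
  using hn_triangle[of "x - y" "y - z"] by simp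

lemma hn_diff_le: "hn x - hn y \<le> hn (x - y)"
  using hn_triangle[of "x - y" y] by simp

end

context hs begin

lemma sokal:
  assumes add: "\<And>x y. \<phi> (x + y) = \<phi> x + \<phi> y"
    and hom: "\<And>a x. \<phi> (sc a x) = a * \<phi> x"
    and r: "0 \<le> r"
  shows "\<exists>x'. hn (x' - x) \<le> r * hn z \<and> r * cmod (\<phi> z) \<le> cmod (\<phi> x')"
proof -
  have m: "\<phi> (x - y) = \<phi> x - \<phi> y" for x y
    using add[of y "x - y"] by simp
  have e: "\<phi> (x + sc (of_real r) z) - \<phi> (x - sc (of_real r) z) = 2 * of_real r * \<phi> z"
    by (simp add: add m hom)
  have "cmod (2 * of_real r * \<phi> z) \<le> cmod (\<phi> (x + sc (of_real r) z)) + cmod (\<phi> (x - sc (of_real r) z))"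
    by (metis e norm_triangle_ineq4)
  then have "2 * (r * cmod (\<phi> z)) \<le> cmod (\<phi> (x + sc (of_real r) z)) + cmod (\<phi> (x - sc (of_real r) z))"
    using r by (simp add: norm_mult)
  then consider "r * cmod (\<phi> z) \<le> cmod (\<phi> (x + sc (of_real r) z))"
    | "r * cmod (\<phi> z) \<le> cmod (\<phi> (x - sc (of_real r) z))" by linarith
  then show ?thesis
  proof cases
    case 1 then show ?thesis
      by (intro exI[of _ "x + sc (of_real r) z"]) (simp add: hn_sc r)
  next
    case 2 then show ?thesis
      by (intro exI[of _ "x - sc (of_real r) z"]) (simp add: hn_sc hn_minus r)
  qed
qed

lemma ubp:
  fixes \<phi> :: "'i \<Rightarrow> 'a \<Rightarrow> complex"
  assumes add: "\<And>i x y. i \<in> I \<Longrightarrow> \<phi> i (x + y) = \<phi> i x + \<phi> i y"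
    and hom: "\<And>i a x. i \<in> I \<Longrightarrow> \<phi> i (sc a x) = a * \<phi> i x"
    and bnd: "\<And>i. i \<in> I \<Longrightarrow> \<exists>c. \<forall>x. cmod (\<phi> i x) \<le> c * hn x"
    and pw: "\<And>x. \<exists>b. \<forall>i\<in>I. cmod (\<phi> i x) \<le> b"
  shows "\<exists>M\<ge>0. \<forall>i\<in>I. \<forall>x. cmod (\<phi> i x) \<le> M * hn x"
proof (rule ccontr)
  assume nM: "\<not> ?thesis"
  define S where "S i = (\<lambda>x. cmod (\<phi> i x)) ` {x. hn x \<le> 1}" for i
  define N where "N i = Sup (S i)" for i
  have ne: "S i \<noteq> {}" for i unfolding S_def by (auto intro!: exI[of _ 0])
  have phi0: "\<phi> i 0 = 0" if "i \<in> I" for i using add[OF that, of 0 0] by simp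
  have bdd: "bdd_above (S i)" if iI: "i \<in> I" for i
  proof -
    obtain c where c: "\<And>x. cmod (\<phi> i x) \<le> c * hn x" using bnd[OF iI] by blast
    have "cmod (\<phi> i x) \<le> max c 0" if "hn x \<le> 1" for x
    proof -
      have "c * hn x \<le> max c 0 * hn x" by (simp add: mult_right_mono)
      also have "\<dots> \<le> max c 0" using that by (simp add: mult_left_le)
      finally show ?thesis using c[of x] by linarith
    qed
    then show ?thesis unfolding S_def by (intro bdd_aboveI[of _ "max c 0"]) auto
  qed
  have N1: "cmod (\<phi> i x) \<le> N i" if "i \<in> I" "hn x \<le> 1" for i x
    unfolding N_def using that bdd[OF that(1)] by (auto simp: S_def intro!: cSup_upper)
  have N0: "0 \<le> N i" if "i \<in> I" for i using N1[OF that, of 0] phi0[OF that] by simp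
  have N3: "cmod (\<phi> i x) \<le> N i * hn x" if "i \<in> I" for i x
  proof (cases "x = 0")
    case True then show ?thesis using phi0[OF that] by simp
  next
    case False
    then have hx: "hn x > 0" using hn_nonneg[of x] hn_eq_0[of x] by linarith
    have "hn (sc (of_real (1 / hn x)) x) = 1" using hx False by (simp add: hn_sc norm_divide)
    then have "cmod (\<phi> i (sc (of_real (1 / hn x)) x)) \<le> N i" using N1[OF that] by simp
    then have "cmod (\<phi> i x) / hn x \<le> N i" using hx by (simp add: hom[OF that] norm_mult norm_divide)
    then show ?thesis using hx by (simp add: divide_le_eq)
  qed
  have big: "\<exists>i\<in>I. N i > M" for M
  proof (rule ccontr)
    assume "\<not> ?thesis"
    then have "\<forall>i\<in>I. \<forall>x. cmod (\<phi> i x) \<le> max M 0 * hn x"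
      using N3 by (meson dual_order.trans hn_nonneg max.cobounded1 mult_right_mono not_less)
    then show False using nM by (meson max.cobounded2)
  qed
  have "\<forall>n. \<exists>i. i \<in> I \<and> N i > 4 ^ n" using big by blast
  from choice[OF this] obtain ii where ii0: "\<forall>n. ii n \<in> I \<and> N (ii n) > 4 ^ n" by blast
  then have ii: "\<And>n. ii n \<in> I" "\<And>n. N (ii n) > 4 ^ n" by auto
  have Npos: "N (ii n) > 0" for n using ii(2)[of n] zero_less_power[of "4::real" n] by linarith
  have "\<exists>z. hn z \<le> 1 \<and> 2/3 * N (ii n) < cmod (\<phi> (ii n) z)" for n
  proof -
    have "2/3 * N (ii n) < N (ii n)" using Npos[of n] by simp
    then obtain v where "v \<in> S (ii n)" "2/3 * N (ii n) < v"
      using less_cSupD[OF ne] unfolding N_def by blast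
    then show ?thesis unfolding S_def by auto
  qed
  then have "\<forall>n. \<exists>z. hn z \<le> 1 \<and> 2/3 * N (ii n) < cmod (\<phi> (ii n) z)" by blast
  from choice[OF this] obtain z where z0: "\<forall>n. hn (z n) \<le> 1 \<and> 2/3 * N (ii n) < cmod (\<phi> (ii n) (z n))"
    by blast
  then have z: "\<And>n. hn (z n) \<le> 1" "\<And>n. 2/3 * N (ii n) < cmod (\<phi> (ii n) (z n))" by auto
  define step where "step n x = (SOME x'. hn (x' - x) \<le> (1/3)^n \<and>
      (1/3)^n * cmod (\<phi> (ii n) (z n)) \<le> cmod (\<phi> (ii n) x'))" for n x
  have stp: "hn (step n x - x) \<le> (1/3)^n \<and>
      (1/3)^n * cmod (\<phi> (ii n) (z n)) \<le> cmod (\<phi> (ii n) (step n x))" for n x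
  proof -
    obtain x' where x': "hn (x' - x) \<le> (1/3)^n * hn (z n)"
       "(1/3)^n * cmod (\<phi> (ii n) (z n)) \<le> cmod (\<phi> (ii n) x')"
      using sokal[of "\<phi> (ii n)" "(1/3)^n" x "z n"] add[OF ii(1)] hom[OF ii(1)] by auto
    have "(1/3::real)^n * hn (z n) \<le> (1/3)^n" using z(1)[of n] by (simp add: mult_left_le)
    then have "hn (x' - x) \<le> (1/3)^n \<and> (1/3)^n * cmod (\<phi> (ii n) (z n)) \<le> cmod (\<phi> (ii n) x')"
      using x' by linarith
    then show ?thesis unfolding step_def by (rule someI)
  qed
  define X where "X = rec_nat 0 (\<lambda>n x. step (Suc n) x)"
  have XS: "X (Suc n) = step (Suc n) (X n)" for n by (simp add: X_def)
  have Xd: "hn (X m - X n) \<le> 1/2 * ((1/3)^n - (1/3)^m)" if "n \<le> m" for m n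
    using that
  proof (induction m rule: dec_induct)
    case base then show ?case by simp
  next
    case (step m)
    have t: "hn (X (Suc m) - X n) \<le> hn (X (Suc m) - X m) + hn (X m - X n)"
      by (rule hn_triangle_diff)
    have a: "hn (X (Suc m) - X m) \<le> (1/3)^(Suc m)" using XS[of m] stp[of "Suc m" "X m"] by (simp del: power_Suc)
    have e: "(1/3::real)^(Suc m) = (1/3)^m / 3" by simp
    have g: "\<And>(A::real) (B::real) (C::real) (p::real) (q::real). A \<le> B + C \<Longrightarrow> B \<le> q / 3 \<Longrightarrow> C \<le> 1/2 * (p - q) \<Longrightarrow> A \<le> 1/2 * (p - q/3)"
      by argo
    show ?case unfolding e by (rule g[OF t a[unfolded e] step.IH])
  qed
  have Xd2: "hn (X m - X n) \<le> (1/3)^N" if "N \<le> m" "N \<le> n" for m n N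
  proof -
    have "hn (X m - X n) \<le> hn (X m - X N) + hn (X N - X n)" by (rule hn_triangle_diff)
    also have "hn (X N - X n) = hn (X n - X N)" by (rule hn_commute)
    finally have c: "hn (X m - X n) \<le> hn (X m - X N) + hn (X n - X N)" .
    have p1: "(0::real) \<le> (1/3)^m" "(0::real) \<le> (1/3)^n" by simp_all
    show ?thesis using c Xd[OF that(1)] Xd[OF that(2)] p1 by argo
  qed
  have "\<exists>L. (\<lambda>n. hn (X n - L)) \<longlonglongrightarrow> 0"
  proof (rule complete, intro allI impI)
    fix e :: real assume "e > 0"
    then obtain N where "(1/3::real)^N < e" using real_arch_pow_inv[of e "1/3"] by auto
    then show "\<exists>N. \<forall>m\<ge>N. \<forall>n\<ge>N. hn (X m - X n) < e" using Xd2 by (meson le_less_trans)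
  qed
  then obtain L where L: "(\<lambda>n. hn (X n - L)) \<longlonglongrightarrow> 0" by blast
  have XL: "hn (X n - L) \<le> 1/2 * (1/3)^n" for n
  proof (rule ccontr)
    assume "\<not> ?thesis"
    then have d: "hn (X n - L) - 1/2 * (1/3)^n > 0" by simp
    from order_tendstoD(2)[OF L d] have "eventually (\<lambda>m. hn (X m - L) < hn (X n - L) - 1/2 * (1/3)^n) sequentially" .
    then obtain N0 where N0: "\<forall>m\<ge>N0. hn (X m - L) < hn (X n - L) - 1/2 * (1/3)^n"
      unfolding eventually_sequentially by blast
    define m where "m = max N0 n"
    have m: "m \<ge> n" "hn (X m - L) < hn (X n - L) - 1/2 * (1/3)^n"
      using N0 unfolding m_def by auto
    have "hn (X n - L) \<le> hn (X n - X m) + hn (X m - L)" by (rule hn_triangle_diff)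
    moreover have "hn (X n - X m) \<le> 1/2 * (1/3)^n"
    proof -
      have p1: "(0::real) \<le> (1/3)^m" by simp
      show ?thesis using Xd[OF m(1)] hn_commute[of "X n" "X m"] p1 by argo
    qed
    ultimately show False using m(2) by linarith
  qed
  obtain b where b: "\<And>i. i \<in> I \<Longrightarrow> cmod (\<phi> i L) \<le> b" using pw[of L] by blast
  have low: "(4/3::real)^(Suc k) / 6 \<le> b" for k
  proof -
    let ?n = "Suc k" let ?i = "ii ?n"
    have i: "?i \<in> I" by (rule ii(1))
    have st: "(1/3)^?n * cmod (\<phi> ?i (z ?n)) \<le> cmod (\<phi> ?i (X ?n))"
      unfolding XS[of k] by (rule conjunct2[OF stp])
    have "(1/3::real)^?n * (2/3 * N ?i) \<le> (1/3)^?n * cmod (\<phi> ?i (z ?n))"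
      using z(2)[of ?n] by (intro mult_left_mono) auto
    with st have A: "(1/3)^?n * (2/3 * N ?i) \<le> cmod (\<phi> ?i (X ?n))" by linarith
    have B: "cmod (\<phi> ?i (X ?n - L)) \<le> N ?i * (1/2 * (1/3)^?n)"
      using N3[OF i, of "X ?n - L"] XL[of ?n] N0[OF i] by (meson mult_left_mono order_trans)
    have "\<phi> ?i (X ?n) = \<phi> ?i L + \<phi> ?i (X ?n - L)" using add[OF i, of L "X ?n - L"] by simp
    then have "cmod (\<phi> ?i (X ?n)) \<le> cmod (\<phi> ?i L) + cmod (\<phi> ?i (X ?n - L))"
      by (metis norm_triangle_ineq)
    moreover have "(1/3::real)^?n * (2/3 * N ?i) = 2/3 * (N ?i * (1/3)^?n)" by (simp add: field_simps)
    moreover have "N ?i * (1/2 * (1/3::real)^?n) = 1/2 * (N ?i * (1/3)^?n)" by (simp add: field_simps)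
    ultimately have C: "N ?i * (1/3)^?n / 6 \<le> cmod (\<phi> ?i L)" using A B by linarith
    have "(4::real)^?n * (1/3)^?n / 6 \<le> N ?i * (1/3)^?n / 6"
      using ii(2)[of ?n] by (intro divide_right_mono mult_right_mono) auto
    moreover have "(4::real)^?n * (1/3)^?n = (4/3)^?n" by (simp add: power_divide)
    ultimately show ?thesis using C b[OF i] by linarith
  qed
  obtain n where "6 * \<bar>b\<bar> < (4/3::real)^n" using real_arch_pow[of "4/3" "6 * \<bar>b\<bar>"] by auto
  moreover have "(4/3::real)^n \<le> (4/3)^(Suc n)" by (simp add: power_increasing)
  ultimately show False using low[of n] by linarith
qed

end

context hs begin

lemma bounded_weak:
  fixes F :: "'a \<Rightarrow> 'a" and D :: "'a set"
  assumes addF: "\<And>x y. F (x + y) = F x + F y" and homF: "\<And>a x. F (sc a x) = sc a (F x)"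
    and Dsc: "\<And>a y. y \<in> D \<Longrightarrow> sc a y \<in> D" and dense: "dense_in ip D"
    and wb: "\<And>y. y \<in> D \<Longrightarrow> \<exists>c. \<forall>x. cmod (ip (F x) y) \<le> c * hn x"
  shows "\<exists>M\<ge>0. \<forall>x. hn (F x) \<le> M * hn x"
proof -
  let ?I = "{y\<in>D. hn y \<le> 1}"
  have "\<exists>M\<ge>0. \<forall>i\<in>?I. \<forall>x. cmod ((\<lambda>y x. ip (F x) y) i x) \<le> M * hn x"
  proof (rule ubp)
    show "ip (F (x + y)) i = ip (F x) i + ip (F y) i" for i x y by (simp add: addF ip_add_l)
    show "ip (F (sc a x)) i = a * ip (F x) i" for i a x by (simp add: homF ip_sc_l)
    show "\<exists>c. \<forall>x. cmod (ip (F x) i) \<le> c * hn x" if "i \<in> ?I" for i using wb that by blast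
    show "\<exists>b. \<forall>i\<in>?I. cmod (ip (F x) i) \<le> b" for x
    proof (intro exI ballI)
      fix i assume i: "i \<in> ?I"
      have "cmod (ip (F x) i) \<le> hn (F x) * hn i" by (rule cauchy_schwarz)
      also have "\<dots> \<le> hn (F x)" using i by (simp add: mult_left_le)
      finally show "cmod (ip (F x) i) \<le> hn (F x)" .
    qed
  qed
  then obtain M where M0: "M \<ge> 0" and M: "\<And>y x. y \<in> D \<Longrightarrow> hn y \<le> 1 \<Longrightarrow> cmod (ip (F x) y) \<le> M * hn x"
    by auto
  have M2: "cmod (ip (F x) y) \<le> M * hn x * hn y" if y: "y \<in> D" for x y
  proof (cases "y = 0")
    case True then show ?thesis by simp
  next
    case False
    then have hy: "hn y > 0" using hn_nonneg[of y] hn_eq_0[of y] by linarith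
    have "hn (sc (of_real (1 / hn y)) y) = 1" using hy False by (simp add: hn_sc norm_divide)
    then have "cmod (ip (F x) (sc (of_real (1 / hn y)) y)) \<le> M * hn x" using M Dsc y by simp
    then have "cmod (ip (F x) y) / hn y \<le> M * hn x" using hy by (simp add: ip_sc_r norm_mult norm_divide)
    then show ?thesis using hy by (simp add: divide_le_eq mult.commute mult.left_commute)
  qed
  have "hn (F x) \<le> M * hn x" for x
  proof -
    define v where "v = F x"
    have sq: "(hn v)^2 \<le> M * hn x * hn v"
    proof (rule field_le_epsilon)
      fix e :: real assume e: "0 < e"
      define k where "k = hn v + M * hn x + 1"
      have k: "k > 0" unfolding k_def using M0 hn_nonneg[of v] mult_nonneg_nonneg[OF M0 hn_nonneg[of x]] by linarith
      obtain d where d: "d \<in> D" "hn (v - d) < e / k" using dense e k unfolding dense_in_def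
        by (meson divide_pos_pos)
      have "ip v v = ip v (v - d) + ip v d" by (simp add: ip_diff_r)
      then have "cmod (ip v v) \<le> cmod (ip v (v - d)) + cmod (ip v d)" by (metis norm_triangle_ineq)
      also have "cmod (ip v (v - d)) \<le> hn v * hn (v - d)" by (rule cauchy_schwarz)
      also have "cmod (ip v d) \<le> M * hn x * hn d" using M2[OF d(1)] unfolding v_def .
      also have "hn d \<le> hn v + hn (v - d)"
        using hn_triangle[of v "- (v - d)"] hn_minus[of "v - d"] by simp
      finally have "cmod (ip v v) \<le> hn v * hn (v - d) + M * hn x * (hn v + hn (v - d))"
        using M0 by (simp add: mult_left_mono)
      also have "\<dots> = M * hn x * hn v + (hn v + M * hn x) * hn (v - d)" by (simp add: algebra_simps)
      also have "(hn v + M * hn x) * hn (v - d) \<le> k * hn (v - d)"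
        unfolding k_def by (simp add: mult_right_mono)
      also have "k * hn (v - d) \<le> e" using d(2) k by (simp add: field_simps)
      finally have "cmod (ip v v) \<le> M * hn x * hn v + e" by simp
      moreover have "cmod (ip v v) = (hn v)^2" unfolding ip_self_hn norm_of_real by simp
      ultimately show "(hn v)^2 \<le> M * hn x * hn v + e" by simp
    qed
    show ?thesis
    proof (cases "hn v > 0")
      case True then show ?thesis using sq unfolding v_def[symmetric]
        by (simp add: power2_eq_square mult_le_cancel_right)
    next
      case False then have "hn v = 0" using hn_nonneg[of v] by linarith
      then show ?thesis using M0 unfolding v_def by simp
    qed
  qed
  then show ?thesis using M0 by blast
qed

end

context hs begin

section \<open>Linear operators as graphs\<close>

lemma lo_zero: "linear_op sc S \<Longrightarrow> (0, 0) \<in> S" unfolding linear_op_def by blast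
lemma lo_add: "linear_op sc S \<Longrightarrow> (x, y) \<in> S \<Longrightarrow> (u, v) \<in> S \<Longrightarrow> (x + u, y + v) \<in> S"
  unfolding linear_op_def by blast
lemma lo_sc: "linear_op sc S \<Longrightarrow> (x, y) \<in> S \<Longrightarrow> (sc a x, sc a y) \<in> S"
  unfolding linear_op_def by blast
lemma lo_fun: "linear_op sc S \<Longrightarrow> (x, y) \<in> S \<Longrightarrow> (x, z) \<in> S \<Longrightarrow> y = z"
  unfolding linear_op_def by blast
lemma lo_neg: "linear_op sc S \<Longrightarrow> (x, y) \<in> S \<Longrightarrow> (- x, - y) \<in> S"
  using lo_sc[of S x y "-1"] by simp
lemma lo_diff: "linear_op sc S \<Longrightarrow> (x, y) \<in> S \<Longrightarrow> (u, v) \<in> S \<Longrightarrow> (x - u, y - v) \<in> S"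
  using lo_add[of S x y "-u" "-v"] lo_neg[of S u v] by simp
lemma lo_inj: "linear_op sc S \<Longrightarrow> (\<And>x. (x, 0) \<in> S \<Longrightarrow> x = 0) \<Longrightarrow> (x1, y) \<in> S \<Longrightarrow> (x2, y) \<in> S \<Longrightarrow> x1 = x2"
  using lo_diff[of S x1 y x2 y] by force

lemma mem_shift: "(x, w) \<in> op_shift sc S l \<longleftrightarrow> (x, w + sc l x) \<in> S"
  unfolding op_shift_def by (auto intro!: exI[of _ x] exI[of _ "w + sc l x"])

lemma shift0: "op_shift sc S 0 = S"
  by (auto simp: mem_shift)

lemma bi_iff: "boundedly_invertible sc ip S \<longleftrightarrow> has_bounded_inverse ip S"
  unfolding boundedly_invertible_def resolvent_set_def by (simp add: shift0)

lemma linear_shift: assumes "linear_op sc S" shows "linear_op sc (op_shift sc S l)"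
  unfolding linear_op_def mem_shift
proof (intro conjI allI impI)
  show "(0, 0 + sc l 0) \<in> S" using lo_zero[OF assms] by simp
  fix x y u v assume "(x, y + sc l x) \<in> S" "(u, v + sc l u) \<in> S"
  from lo_add[OF assms this] show "(x + u, y + v + sc l (x + u)) \<in> S"
    by (simp add: vs.scale_right_distrib algebra_simps)
next
  fix a x y assume "(x, y + sc l x) \<in> S"
  from lo_sc[OF assms this, of a] show "(sc a x, sc a y + sc l (sc a x)) \<in> S"
    by (simp add: vs.scale_right_distrib mult.commute)
next
  fix x y z assume "(x, y + sc l x) \<in> S" "(x, z + sc l x) \<in> S"
  from lo_fun[OF assms this] show "y = z" by simp
qed

lemma linear_mult: assumes A: "linear_op sc A" and B: "linear_op sc B"
  shows "linear_op sc (op_mult A B)"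
  unfolding linear_op_def op_mult_def
proof (intro conjI allI impI; clarsimp)
  show "\<exists>y. (0, y) \<in> B \<and> (y, 0) \<in> A" using lo_zero[OF A] lo_zero[OF B] by blast
next
  fix x y u v p q
  assume "(x, p) \<in> B" "(p, y) \<in> A" "(u, q) \<in> B" "(q, v) \<in> A"
  then show "\<exists>w. (x + u, w) \<in> B \<and> (w, y + v) \<in> A" using lo_add[OF A] lo_add[OF B] by blast
next
  fix a x y p assume "(x, p) \<in> B" "(p, y) \<in> A"
  then show "\<exists>w. (sc a x, w) \<in> B \<and> (w, sc a y) \<in> A" using lo_sc[OF A] lo_sc[OF B] by blast
next
  fix x y z p q assume "(x, p) \<in> B" "(p, y) \<in> A" "(x, q) \<in> B" "(q, z) \<in> A"
  then show "y = z" using lo_fun[OF A] lo_fun[OF B] by metis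
qed

lemma hbi_nonneg: assumes "has_bounded_inverse ip T"
  shows "\<exists>C\<ge>0. \<forall>x y. (x, y) \<in> T \<longrightarrow> hn x \<le> C * hn y"
proof -
  obtain C where C: "\<And>x y. (x, y) \<in> T \<Longrightarrow> hn x \<le> C * hn y"
    using assms unfolding has_bounded_inverse_def by blast
  have "hn x \<le> max C 0 * hn y" if "(x, y) \<in> T" for x y
    using C[OF that] mult_right_mono[of C "max C 0" "hn y"] by simp
  then show ?thesis by (intro exI[of _ "max C 0"]) auto
qed

lemma hbi_fun:
  assumes T: "linear_op sc T" and h: "has_bounded_inverse ip T"
  obtains R C where "\<And>z. (R z, z) \<in> T" "\<And>x z. (x, z) \<in> T \<Longrightarrow> x = R z" "C \<ge> 0"
    "\<And>z. hn (R z) \<le> C * hn z" "\<And>x y. R (x + y) = R x + R y" "\<And>a x. R (sc a x) = sc a (R x)"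
proof -
  have inj: "\<And>x1 x2 y. (x1, y) \<in> T \<Longrightarrow> (x2, y) \<in> T \<Longrightarrow> x1 = x2"
    and rng: "Range T = UNIV" using h unfolding has_bounded_inverse_def by blast+
  obtain C where C: "C \<ge> 0" "\<And>x y. (x, y) \<in> T \<Longrightarrow> hn x \<le> C * hn y" using hbi_nonneg[OF h] by blast
  define R where "R z = (SOME x. (x, z) \<in> T)" for z
  have R1: "(R z, z) \<in> T" for z
  proof -
    have "\<exists>x. (x, z) \<in> T" using rng by (metis Range_iff UNIV_I)
    then show ?thesis unfolding R_def by (rule someI_ex)
  qed
  have R2: "x = R z" if "(x, z) \<in> T" for x z using inj[OF that R1] .
  show ?thesis
  proof (rule that[of R C])
    show "(R z, z) \<in> T" for z by (rule R1)
    show "(x, z) \<in> T \<Longrightarrow> x = R z" for x z by (rule R2)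
    show "C \<ge> 0" by (rule C(1))
    show "hn (R z) \<le> C * hn z" for z using C(2)[OF R1] .
    show "R (x + y) = R x + R y" for x y using R2[OF lo_add[OF T R1 R1]] by simp
    show "R (sc a x) = sc a (R x)" for a x using R2[OF lo_sc[OF T R1]] by simp
  qed
qed

lemma compose_fun:
  assumes B: "linear_op sc B" and addR: "\<And>x y. R (x + y) = R x + R y"
    and homR: "\<And>a x. R (sc a x) = sc a (R x)" and dom: "\<And>w. \<exists>s. (R w, s) \<in> B"
  obtains F where "\<And>w. (R w, F w) \<in> B" "\<And>x y. F (x + y) = F x + F y" "\<And>a x. F (sc a x) = sc a (F x)"
proof -
  define F where "F w = (SOME s. (R w, s) \<in> B)" for w
  have F1: "(R w, F w) \<in> B" for w unfolding F_def using dom by (rule someI_ex)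
  show ?thesis
  proof (rule that)
    show "(R w, F w) \<in> B" for w by (rule F1)
    show "F (x + y) = F x + F y" for x y
      using lo_fun[OF B F1[of "x + y"]] lo_add[OF B F1[of x] F1[of y]] addR by simp
    show "F (sc a x) = sc a (F x)" for a x
      using lo_fun[OF B F1[of "sc a x"]] lo_sc[OF B F1[of x]] homR by simp
  qed
qed

section \<open>Selfadjoint operators\<close>

lemma sa_lin: "selfadjoint sc ip S \<Longrightarrow> linear_op sc S" unfolding selfadjoint_def by blast
lemma sa_dense: "selfadjoint sc ip S \<Longrightarrow> dense_in ip (Domain S)" unfolding selfadjoint_def by blast
lemma sa_sym: assumes "selfadjoint sc ip S" "(x, a) \<in> S" "(y, b) \<in> S" shows "ip a y = ip x b"
proof -
  have "(y, b) \<in> adjoint ip S" using assms unfolding selfadjoint_def by simp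
  then show ?thesis using assms(2) unfolding adjoint_def by blast
qed

lemma sa_dom_sc: "selfadjoint sc ip S \<Longrightarrow> y \<in> Domain S \<Longrightarrow> sc a y \<in> Domain S"
  using lo_sc[OF sa_lin] by blast

lemma sa_comp_bounded:
  assumes B: "selfadjoint sc ip B" and addR: "\<And>x y. R (x + y) = R x + R y"
    and homR: "\<And>a x. R (sc a x) = sc a (R x)" and dom: "\<And>w. \<exists>s. (R w, s) \<in> B"
    and C: "C \<ge> 0" "\<And>z. hn (R z) \<le> C * hn z"
  obtains F M where "\<And>w. (R w, F w) \<in> B" "\<And>x y. F (x + y) = F x + F y"
    "\<And>a x. F (sc a x) = sc a (F x)" "M \<ge> 0" "\<And>w. hn (F w) \<le> M * hn w"
proof -
  obtain F where F: "\<And>w. (R w, F w) \<in> B" "\<And>x y. F (x + y) = F x + F y" "\<And>a x. F (sc a x) = sc a (F x)"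
    using compose_fun[OF sa_lin[OF B] addR homR dom] by blast
  have "\<exists>M\<ge>0. \<forall>x. hn (F x) \<le> M * hn x"
  proof (rule bounded_weak[OF F(2,3) sa_dom_sc[OF B] sa_dense[OF B]])
    fix y assume "y \<in> Domain B"
    then obtain b where b: "(y, b) \<in> B" by blast
    have "cmod (ip (F x) y) \<le> C * hn b * hn x" for x
    proof -
      have "ip (F x) y = ip (R x) b" using sa_sym[OF B F(1) b] .
      then have "cmod (ip (F x) y) \<le> hn (R x) * hn b" using cauchy_schwarz by simp
      also have "\<dots> \<le> C * hn x * hn b" using C(2) by (simp add: mult_right_mono)
      finally show ?thesis by (simp add: mult_ac)
    qed
    then show "\<exists>c. \<forall>x. cmod (ip (F x) y) \<le> c * hn x" by blast
  qed
  then show ?thesis using that F by blast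
qed

lemma sa_surj_bi:
  assumes S: "selfadjoint sc ip S" and rng: "Range S = UNIV"
  shows "has_bounded_inverse ip S"
proof -
  have lin: "linear_op sc S" by (rule sa_lin[OF S])
  have ker: "x = 0" if "(x, 0) \<in> S" for x
  proof -
    obtain u where "(u, x) \<in> S" using rng by (metis Range_iff UNIV_I)
    from sa_sym[OF S this that] have "ip x x = 0" by simp
    then show ?thesis by (rule ip_def0)
  qed
  have inj: "\<And>x1 x2 y. (x1, y) \<in> S \<Longrightarrow> (x2, y) \<in> S \<Longrightarrow> x1 = x2" using lo_inj[OF lin ker] by blast
  define R where "R z = (SOME x. (x, z) \<in> S)" for z
  have R1: "(R z, z) \<in> S" for z
  proof -
    have "\<exists>x. (x, z) \<in> S" using rng by (metis Range_iff UNIV_I)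
    then show ?thesis unfolding R_def by (rule someI_ex)
  qed
  have R2: "x = R z" if "(x, z) \<in> S" for x z using inj[OF that R1] .
  have addR: "R (x + y) = R x + R y" for x y using R2[OF lo_add[OF lin R1 R1]] by simp
  have homR: "R (sc a x) = sc a (R x)" for a x using R2[OF lo_sc[OF lin R1]] by simp
  have "\<exists>M\<ge>0. \<forall>x. hn (R x) \<le> M * hn x"
  proof (rule bounded_weak[OF addR homR, of UNIV])
    show "dense_in ip UNIV" unfolding dense_in_def by (metis UNIV_I diff_self hn_0)
    fix y :: 'a
    have "cmod (ip (R x) y) \<le> hn (R y) * hn x" for x
    proof -
      have "ip x (R y) = ip (R x) y" using sa_sym[OF S R1[of x] R1[of y]] .
      then have "cmod (ip (R x) y) = cmod (ip x (R y))" by simp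
      also have "\<dots> \<le> hn x * hn (R y)" by (rule cauchy_schwarz)
      finally show ?thesis by (simp add: mult_ac)
    qed
    then show "\<exists>c. \<forall>x. cmod (ip (R x) y) \<le> c * hn x" by blast
  qed simp
  then obtain M where M: "\<And>x. hn (R x) \<le> M * hn x" by blast
  show ?thesis unfolding has_bounded_inverse_def
  proof (intro conjI)
    show "\<forall>x1 x2 y. (x1, y) \<in> S \<longrightarrow> (x2, y) \<in> S \<longrightarrow> x1 = x2" using inj by blast
    show "Range S = UNIV" by (rule rng)
    show "\<exists>C. \<forall>x y. (x, y) \<in> S \<longrightarrow> hn x \<le> C * hn y" using M R2 by metis
  qed
qed

end

context hs begin

lemma comp_bi:
  assumes A: "linear_op sc A" and B: "linear_op sc B"
    and hA: "has_bounded_inverse ip A" and hB: "has_bounded_inverse ip B"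
  shows "has_bounded_inverse ip (op_mult A B)"
proof -
  obtain CA where CA: "CA \<ge> 0" "\<And>x y. (x, y) \<in> A \<Longrightarrow> hn x \<le> CA * hn y" using hbi_nonneg[OF hA] by blast
  obtain CB where CB: "CB \<ge> 0" "\<And>x y. (x, y) \<in> B \<Longrightarrow> hn x \<le> CB * hn y" using hbi_nonneg[OF hB] by blast
  have iA: "\<And>x1 x2 y. (x1, y) \<in> A \<Longrightarrow> (x2, y) \<in> A \<Longrightarrow> x1 = x2" and rA: "Range A = UNIV"
    using hA unfolding has_bounded_inverse_def by blast+
  have iB: "\<And>x1 x2 y. (x1, y) \<in> B \<Longrightarrow> (x2, y) \<in> B \<Longrightarrow> x1 = x2" and rB: "Range B = UNIV"
    using hB unfolding has_bounded_inverse_def by blast+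
  show ?thesis unfolding has_bounded_inverse_def
  proof (intro conjI allI impI)
    fix x1 x2 y assume "(x1, y) \<in> op_mult A B" "(x2, y) \<in> op_mult A B"
    then show "x1 = x2" unfolding op_mult_def using iA iB by blast
  next
    show "Range (op_mult A B) = UNIV"
    proof (intro set_eqI iffI)
      fix z :: 'a
      obtain y where y: "(y, z) \<in> A" using rA by (metis Range_iff UNIV_I)
      obtain x where x: "(x, y) \<in> B" using rB by (metis Range_iff UNIV_I)
      show "z \<in> Range (op_mult A B)" using x y unfolding op_mult_def by blast
    qed simp
  next
    show "\<exists>C. \<forall>x z. (x, z) \<in> op_mult A B \<longrightarrow> hn x \<le> C * hn z"
    proof (intro exI[of _ "CB * CA"] allI impI)
      fix x z assume "(x, z) \<in> op_mult A B"
      then obtain y where y: "(x, y) \<in> B" "(y, z) \<in> A" unfolding op_mult_def by blast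
      have "hn x \<le> CB * hn y" by (rule CB(2)[OF y(1)])
      also have "\<dots> \<le> CB * (CA * hn z)" using CA(2)[OF y(2)] CB(1) by (rule mult_left_mono)
      finally show "hn x \<le> CB * CA * hn z" by (simp add: mult_ac)
    qed
  qed
qed

lemma surj_bi:
  assumes A: "selfadjoint sc ip A" and G: "selfadjoint sc ip G"
    and rng: "Range (op_mult A G) = UNIV" and mu: "\<mu> \<in> resolvent_set sc ip (op_mult G A)"
  shows "has_bounded_inverse ip A \<and> has_bounded_inverse ip G"
proof -
  have lA: "linear_op sc A" and lG: "linear_op sc G" using A G by (auto intro: sa_lin)
  have rA: "Range A = UNIV" using rng unfolding op_mult_def by blast
  have hA: "has_bounded_inverse ip A" by (rule sa_surj_bi[OF A rA])
  have iA: "\<And>x1 x2 y. (x1, y) \<in> A \<Longrightarrow> (x2, y) \<in> A \<Longrightarrow> x1 = x2"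
    using hA unfolding has_bounded_inverse_def by blast
  have domA: "x \<in> Range G" if "(x, a) \<in> A" for x a
  proof -
    have "a \<in> Range (op_mult A G)" using rng by simp
    then obtain u v where "(u, v) \<in> G" "(v, a) \<in> A" unfolding op_mult_def by blast
    with iA[OF that] show ?thesis by blast
  qed
  have rG: "Range G = UNIV"
  proof (intro set_eqI iffI)
    fix z :: 'a
    have "Range (op_shift sc (op_mult G A) \<mu>) = UNIV" using mu
      unfolding resolvent_set_def has_bounded_inverse_def by blast
    then obtain x where "(x, z) \<in> op_shift sc (op_mult G A) \<mu>" by (metis Range_iff UNIV_I)
    then have "(x, z + sc \<mu> x) \<in> op_mult G A" by (simp add: mem_shift)
    then obtain t where t: "(x, t) \<in> A" "(t, z + sc \<mu> x) \<in> G" unfolding op_mult_def by blast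
    obtain u where u: "(u, x) \<in> G" using domA[OF t(1)] by blast
    have "(t - sc \<mu> u, z + sc \<mu> x - sc \<mu> x) \<in> G" by (rule lo_diff[OF lG t(2) lo_sc[OF lG u]])
    then show "z \<in> Range G" by auto
  qed simp
  show ?thesis using hA sa_surj_bi[OF G rG] by blast
qed

lemma spec_nonzero:
  assumes A: "selfadjoint sc ip A" and B: "selfadjoint sc ip B" and l0: "l \<noteq> 0"
    and l: "l \<in> resolvent_set sc ip (op_mult A B)" and mu: "\<mu> \<in> resolvent_set sc ip (op_mult B A)"
  shows "l \<in> resolvent_set sc ip (op_mult B A)"
proof -
  have lA: "linear_op sc A" and lB: "linear_op sc B" using A B by (auto intro: sa_lin)
  define T1 where "T1 = op_shift sc (op_mult A B) l"
  define T2 where "T2 = op_shift sc (op_mult B A) l"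
  define T3 where "T3 = op_shift sc (op_mult B A) \<mu>"
  have lT1: "linear_op sc T1" unfolding T1_def by (intro linear_shift linear_mult lA lB)
  have lT2: "linear_op sc T2" unfolding T2_def by (intro linear_shift linear_mult lA lB)
  have lT3: "linear_op sc T3" unfolding T3_def by (intro linear_shift linear_mult lA lB)
  have h1: "has_bounded_inverse ip T1" using l unfolding T1_def resolvent_set_def by simp
  have h3: "has_bounded_inverse ip T3" using mu unfolding T3_def resolvent_set_def by simp
  obtain R CR where R: "\<And>z. (R z, z) \<in> T1" "\<And>x z. (x, z) \<in> T1 \<Longrightarrow> x = R z" "CR \<ge> 0" "\<And>z. hn (R z) \<le> CR * hn z"
    "\<And>x y. R (x + y) = R x + R y" "\<And>a x. R (sc a x) = sc a (R x)"
    using hbi_fun[OF lT1 h1] by blast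
  have Rm: "\<exists>s. (R w, s) \<in> B \<and> (s, w + sc l (R w)) \<in> A" for w
    using R(1)[of w] unfolding T1_def mem_shift op_mult_def by blast
  have Rm': "\<exists>s. (R w, s) \<in> B" for w using Rm[of w] by blast
  obtain F1 M1 where F1: "\<And>w. (R w, F1 w) \<in> B" "\<And>x y. F1 (x + y) = F1 x + F1 y"
    "\<And>a x. F1 (sc a x) = sc a (F1 x)" "M1 \<ge> 0" "\<And>w. hn (F1 w) \<le> M1 * hn w"
    using sa_comp_bounded[OF B R(5,6) Rm' R(3,4)] by blast
  have F1A: "(F1 w, w + sc l (R w)) \<in> A" for w
    using Rm[of w] lo_fun[OF lB F1(1)[of w]] by metis
  obtain Q CQ where Q: "\<And>z. (Q z, z) \<in> T3" "\<And>x z. (x, z) \<in> T3 \<Longrightarrow> x = Q z" "CQ \<ge> 0" "\<And>z. hn (Q z) \<le> CQ * hn z"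
    "\<And>x y. Q (x + y) = Q x + Q y" "\<And>a x. Q (sc a x) = sc a (Q x)"
    using hbi_fun[OF lT3 h3] by blast
  have Qm: "\<exists>t. (Q z, t) \<in> A \<and> (t, z + sc \<mu> (Q z)) \<in> B" for z
    using Q(1)[of z] unfolding T3_def mem_shift op_mult_def by blast
  have Qm': "\<exists>s. (Q w, s) \<in> A" for w using Qm[of w] by blast
  obtain F2 M2 where F2: "\<And>w. (Q w, F2 w) \<in> A" "\<And>x y. F2 (x + y) = F2 x + F2 y"
    "\<And>a x. F2 (sc a x) = sc a (F2 x)" "M2 \<ge> 0" "\<And>w. hn (F2 w) \<le> M2 * hn w"
    using sa_comp_bounded[OF A Q(5,6) Qm' Q(3,4)] by blast
  have F2B: "(F2 z, z + sc \<mu> (Q z)) \<in> B" for z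
    using Qm[of z] lo_fun[OF lA F2(1)[of z]] by metis
  have inj1: "\<And>x1 x2 y. (x1, y) \<in> T1 \<Longrightarrow> (x2, y) \<in> T1 \<Longrightarrow> x1 = x2"
    using h1 unfolding has_bounded_inverse_def by blast
  have ker: "x = 0" if "(x, 0) \<in> T2" for x
  proof -
    have "(x, sc l x) \<in> op_mult B A" using that unfolding T2_def mem_shift by simp
    then obtain t where t: "(x, t) \<in> A" "(t, sc l x) \<in> B" unfolding op_mult_def by blast
    have "(sc l x, sc l t) \<in> A" by (rule lo_sc[OF lA t(1)])
    with t(2) have "(t, sc l t) \<in> op_mult A B" unfolding op_mult_def by blast
    then have "(t, 0) \<in> T1" unfolding T1_def mem_shift by simp
    moreover have "(0, 0) \<in> T1" by (rule lo_zero[OF lT1])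
    ultimately have "t = 0" by (rule inj1)
    then have "sc l x = 0" using t(2) lo_fun[OF lB _ lo_zero[OF lB]] by blast
    then show ?thesis using l0 by simp
  qed
  have inj2: "\<And>x1 x2 y. (x1, y) \<in> T2 \<Longrightarrow> (x2, y) \<in> T2 \<Longrightarrow> x1 = x2"
    using lo_inj[OF lT2 ker] by blast
  define X where "X z = Q z + sc (l - \<mu>) (sc (1 / l) (F1 (F2 z) - Q z))" for z
  have Xin: "(X z, z) \<in> T2" for z
  proof -
    let ?y = "Q z" let ?a = "F2 z" let ?r = "R ?a" let ?s = "F1 ?a"
    let ?x1 = "sc (1 / l) (?s - ?y)"
    have ya: "(?y, ?a) \<in> A" by (rule F2(1))
    have aB: "(?a, z + sc \<mu> ?y) \<in> B" by (rule F2B)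
    have rs: "(?r, ?s) \<in> B" by (rule F1(1))
    have sA: "(?s, ?a + sc l ?r) \<in> A" by (rule F1A)
    have "(?s - ?y, ?a + sc l ?r - ?a) \<in> A" by (rule lo_diff[OF lA sA ya])
    then have d: "(?s - ?y, sc l ?r) \<in> A" by simp
    have "(?x1, sc (1 / l) (sc l ?r)) \<in> A" by (rule lo_sc[OF lA d])
    then have x1A: "(?x1, ?r) \<in> A" using l0 by simp
    have x1: "(?x1, ?s) \<in> op_mult B A" using x1A rs unfolding op_mult_def by blast
    have y: "(?y, z + sc \<mu> ?y) \<in> op_mult B A" using ya aB unfolding op_mult_def by blast
    have "(?y + sc (l - \<mu>) ?x1, (z + sc \<mu> ?y) + sc (l - \<mu>) ?s) \<in> op_mult B A"
      by (rule lo_add[OF linear_mult[OF lB lA] y lo_sc[OF linear_mult[OF lB lA] x1]])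
    moreover have "?y + sc (l - \<mu>) ?x1 = X z" unfolding X_def ..
    moreover have "(z + sc \<mu> ?y) + sc (l - \<mu>) ?s = z + sc l (X z)"
    proof -
      have c: "l * ((l - \<mu>) * (1 / l)) = l - \<mu>" using l0 by (simp add: field_simps)
      have "sc l (sc (l - \<mu>) ?x1) = sc (l * ((l - \<mu>) * (1 / l))) (?s - ?y)" by (simp only: vs.scale_scale)
      then have "sc l (sc (l - \<mu>) ?x1) = sc (l - \<mu>) (?s - ?y)" by (simp only: c)
      then have "sc l (X z) = sc l ?y + sc (l - \<mu>) ?s - sc (l - \<mu>) ?y"
        unfolding X_def by (simp add: vs.scale_right_distrib vs.scale_right_diff_distrib)
      then show ?thesis by (simp add: vs.scale_left_diff_distrib)
    qed
    ultimately show ?thesis unfolding T2_def mem_shift by simp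
  qed
  define K where "K = CQ + cmod (l - \<mu>) / cmod l * (M1 * M2 + CQ)"
  have Xb: "hn (X z) \<le> K * hn z" for z
  proof -
    have s: "hn (F1 (F2 z)) \<le> M1 * M2 * hn z"
    proof -
      have "hn (F1 (F2 z)) \<le> M1 * hn (F2 z)" by (rule F1(5))
      also have "\<dots> \<le> M1 * (M2 * hn z)" using F2(5) F1(4) by (rule mult_left_mono)
      finally show ?thesis by (simp add: mult_ac)
    qed
    have "hn (F1 (F2 z) - Q z) \<le> hn (F1 (F2 z)) + hn (Q z)"
      using hn_triangle[of "F1 (F2 z)" "- Q z"] hn_minus[of "Q z"] by simp
    also have "\<dots> \<le> (M1 * M2 + CQ) * hn z" using s Q(4)[of z] by (simp add: algebra_simps)
    finally have d: "hn (F1 (F2 z) - Q z) \<le> (M1 * M2 + CQ) * hn z" .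
    have h1: "hn (X z) \<le> hn (Q z) + hn (sc (l - \<mu>) (sc (1 / l) (F1 (F2 z) - Q z)))"
      unfolding X_def by (rule hn_triangle)
    have "hn (sc (l - \<mu>) (sc (1 / l) (F1 (F2 z) - Q z))) =
        cmod (l - \<mu>) / cmod l * hn (F1 (F2 z) - Q z)" by (simp add: hn_sc norm_divide)
    also have "\<dots> \<le> cmod (l - \<mu>) / cmod l * ((M1 * M2 + CQ) * hn z)"
      using d by (rule mult_left_mono) simp
    finally have h: "hn (X z) \<le> hn (Q z) + cmod (l - \<mu>) / cmod l * ((M1 * M2 + CQ) * hn z)"
      using h1 by linarith
    have k: "K * hn z = CQ * hn z + cmod (l - \<mu>) / cmod l * ((M1 * M2 + CQ) * hn z)"
      unfolding K_def by (simp add: algebra_simps add_divide_distrib)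
    show ?thesis using h k Q(4)[of z] by linarith
  qed
  have "has_bounded_inverse ip T2" unfolding has_bounded_inverse_def
  proof (intro conjI)
    show "\<forall>x1 x2 y. (x1, y) \<in> T2 \<longrightarrow> (x2, y) \<in> T2 \<longrightarrow> x1 = x2" using inj2 by blast
    show "Range T2 = UNIV" using Xin by blast
    show "\<exists>C. \<forall>x y. (x, y) \<in> T2 \<longrightarrow> hn x \<le> C * hn y"
    proof (intro exI[of _ K] allI impI)
      fix x y assume "(x, y) \<in> T2"
      then have "x = X y" using inj2[OF _ Xin] by blast
      then show "hn x \<le> K * hn y" using Xb by simp
    qed
  qed
  then show ?thesis unfolding T2_def resolvent_set_def by simp
qed

end

theorem propositionp:
  fixes sc :: "complex \<Rightarrow> 'a::ab_group_add \<Rightarrow> 'a"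
    and ip :: "'a \<Rightarrow> 'a \<Rightarrow> complex"
    and A G :: "('a \<times> 'a) set"
  assumes "chilbert sc ip"
    and "selfadjoint sc ip A" and "selfadjoint sc ip G"
    and "resolvent_set sc ip (op_mult A G) \<noteq> {}"
    and "resolvent_set sc ip (op_mult G A) \<noteq> {}"
  shows "(boundedly_invertible sc ip (op_mult A G) \<longleftrightarrow> Range (op_mult A G) = UNIV)
       \<and> (Range (op_mult A G) = UNIV \<longleftrightarrow> boundedly_invertible sc ip (op_mult G A))
       \<and> (boundedly_invertible sc ip (op_mult G A) \<longleftrightarrow> Range (op_mult G A) = UNIV)
       \<and> (Range (op_mult G A) = UNIV \<longleftrightarrow>
            boundedly_invertible sc ip A \<and> boundedly_invertible sc ip G)
       \<and> spectrum_op sc ip (op_mult A G) = spectrum_op sc ip (op_mult G A)"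
proof -
  interpret hs sc ip by (rule hs.intro) (rule assms(1))
  note A = assms(2) and G = assms(3)
  obtain \<nu> where nu: "\<nu> \<in> resolvent_set sc ip (op_mult A G)" using assms(4) by blast
  obtain \<mu> where mu: "\<mu> \<in> resolvent_set sc ip (op_mult G A)" using assms(5) by blast
  have lA: "linear_op sc A" and lG: "linear_op sc G" using A G by (auto intro: sa_lin)
  let ?a = "boundedly_invertible sc ip (op_mult A G)"
  let ?b = "Range (op_mult A G) = UNIV"
  let ?c = "boundedly_invertible sc ip (op_mult G A)"
  let ?d = "Range (op_mult G A) = UNIV"
  let ?e = "boundedly_invertible sc ip A \<and> boundedly_invertible sc ip G"
  have ab: "?a \<Longrightarrow> ?b" unfolding bi_iff has_bounded_inverse_def by blast
  have cd: "?c \<Longrightarrow> ?d" unfolding bi_iff has_bounded_inverse_def by blast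
  have be: "?b \<Longrightarrow> ?e" using surj_bi[OF A G _ mu] unfolding bi_iff by blast
  have de: "?d \<Longrightarrow> ?e" using surj_bi[OF G A _ nu] unfolding bi_iff by blast
  have ea: "?e \<Longrightarrow> ?a" using comp_bi[OF lA lG] unfolding bi_iff by blast
  have ec: "?e \<Longrightarrow> ?c" using comp_bi[OF lG lA] unfolding bi_iff by blast
  have spec: "resolvent_set sc ip (op_mult A G) = resolvent_set sc ip (op_mult G A)"
  proof (intro set_eqI iffI)
    fix l assume l: "l \<in> resolvent_set sc ip (op_mult A G)"
    show "l \<in> resolvent_set sc ip (op_mult G A)"
    proof (cases "l = 0")
      case True then show ?thesis using l ab be ec unfolding boundedly_invertible_def by blast
    next
      case False show ?thesis by (rule spec_nonzero[OF A G False l mu])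
    qed
  next
    fix l assume l: "l \<in> resolvent_set sc ip (op_mult G A)"
    show "l \<in> resolvent_set sc ip (op_mult A G)"
    proof (cases "l = 0")
      case True then show ?thesis using l cd de ea unfolding boundedly_invertible_def by blast
    next
      case False show ?thesis by (rule spec_nonzero[OF G A False l nu])
    qed
  qed
  show ?thesis unfolding spectrum_op_def spec using ab be ea cd de ec by blast
qed



end
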